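(* Let $G$ be a graph of order $n$ and diameter $d$. Let $T$ be a reduced tree decomposition of $G$ of length $\ell$ and width $w$. If there is a resolving set of size $k$ in $G$, then $n=\mathcal{O}(kd^2(2\ell+1)^{3w+1})$, where the constant implicit in the $\mathcal{O}$-notation is absolute (independent of $G$, $k$, $d$, $\ell$, $w$).
   Context: A set $R$ of vertices of a graph $G$ is a resolving set if for each pair $u,v$ of distinct vertices there is $x\in R$ with $d_G(x,u)\neq d_G(x,v)$. A tree decomposition of $G$ is a tree $T$ whose vertices (bags) are subsets of $V(G)$ such that: the union of all bags is $V(G)$; for every edge of $G$ some bag contains both ends; and if bag $Y$ lies on the path in $T$ from bag $X$ to bag $Z$, then $X\cap Z\subseteq Y$. Its width is $\max\{|X|-1: X\in V(T)\}$. The diameter of a bag $X$ is $\max_{x,y\in X} d_G(x,y)$ (distance in $G$), and the length of the decomposition is the largest diameter of a bag. A tree decomposition is reduced if no bag is a subset of another bag. *)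

theory Defs
  imports Complex_Main
begin

definition simple_graph :: "'a set \<Rightarrow> ('a \<Rightarrow> 'a \<Rightarrow> bool) \<Rightarrow> bool" where
  "simple_graph V E \<longleftrightarrow> finite V \<and> (\<forall>u v. E u v \<longrightarrow> u \<in> V \<and> v \<in> V)
     \<and> (\<forall>u v. E u v \<longrightarrow> E v u) \<and> (\<forall>u. \<not> E u u)"

definition walk :: "'a set \<Rightarrow> ('a \<Rightarrow> 'a \<Rightarrow> bool) \<Rightarrow> 'a list \<Rightarrow> bool" where
  "walk V E p \<longleftrightarrow> p \<noteq> [] \<and> set p \<subseteq> V \<and> (\<forall>i. Suc i < length p \<longrightarrow> E (p ! i) (p ! Suc i))"

definition gpath :: "'a set \<Rightarrow> ('a \<Rightarrow> 'a \<Rightarrow> bool) \<Rightarrow> 'a list \<Rightarrow> bool" where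
  "gpath V E p \<longleftrightarrow> walk V E p \<and> distinct p"

definition connected_graph :: "'a set \<Rightarrow> ('a \<Rightarrow> 'a \<Rightarrow> bool) \<Rightarrow> bool" where
  "connected_graph V E \<longleftrightarrow> V \<noteq> {} \<and>
     (\<forall>u\<in>V. \<forall>v\<in>V. \<exists>p. walk V E p \<and> hd p = u \<and> last p = v)"

definition gdist :: "'a set \<Rightarrow> ('a \<Rightarrow> 'a \<Rightarrow> bool) \<Rightarrow> 'a \<Rightarrow> 'a \<Rightarrow> nat" where
  "gdist V E u v = (LEAST n. \<exists>p. walk V E p \<and> hd p = u \<and> last p = v \<and> length p = Suc n)"

definition diameter :: "'a set \<Rightarrow> ('a \<Rightarrow> 'a \<Rightarrow> bool) \<Rightarrow> nat" where
  "diameter V E = Sup {gdist V E x y | x y. x \<in> V \<and> y \<in> V}"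

definition resolving_set :: "'a set \<Rightarrow> ('a \<Rightarrow> 'a \<Rightarrow> bool) \<Rightarrow> 'a set \<Rightarrow> bool" where
  "resolving_set V E R \<longleftrightarrow> R \<subseteq> V \<and>
     (\<forall>u\<in>V. \<forall>v\<in>V. u \<noteq> v \<longrightarrow> (\<exists>x\<in>R. gdist V E x u \<noteq> gdist V E x v))"

definition has_cycle :: "'a set \<Rightarrow> ('a \<Rightarrow> 'a \<Rightarrow> bool) \<Rightarrow> bool" where
  "has_cycle V E \<longleftrightarrow> (\<exists>p. gpath V E p \<and> length p \<ge> 3 \<and> E (last p) (hd p))"

definition is_tree :: "'a set \<Rightarrow> ('a \<Rightarrow> 'a \<Rightarrow> bool) \<Rightarrow> bool" where
  "is_tree V E \<longleftrightarrow> simple_graph V E \<and> connected_graph V E \<and> \<not> has_cycle V E"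

definition tree_decomposition ::
  "'a set \<Rightarrow> ('a \<Rightarrow> 'a \<Rightarrow> bool) \<Rightarrow> 'a set set \<Rightarrow> ('a set \<Rightarrow> 'a set \<Rightarrow> bool) \<Rightarrow> bool" where
  "tree_decomposition V E TV TE \<longleftrightarrow>
     is_tree TV TE \<and>
     \<Union> TV = V \<and>
     (\<forall>u v. E u v \<longrightarrow> (\<exists>X\<in>TV. u \<in> X \<and> v \<in> X)) \<and>
     (\<forall>p. gpath TV TE p \<longrightarrow> (\<forall>Y\<in>set p. hd p \<inter> last p \<subseteq> Y))"

definition reduced :: "'a set set \<Rightarrow> bool" where
  "reduced TV \<longleftrightarrow> (\<forall>X\<in>TV. \<forall>Y\<in>TV. X \<noteq> Y \<longrightarrow> \<not> X \<subseteq> Y)"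

definition td_width :: "'a set set \<Rightarrow> nat" where
  "td_width TV = Sup {card X - 1 | X. X \<in> TV}"

definition bag_diameter :: "'a set \<Rightarrow> ('a \<Rightarrow> 'a \<Rightarrow> bool) \<Rightarrow> 'a set \<Rightarrow> nat" where
  "bag_diameter V E X = Sup {gdist V E x y | x y. x \<in> X \<and> y \<in> X}"

definition td_length :: "'a set \<Rightarrow> ('a \<Rightarrow> 'a \<Rightarrow> bool) \<Rightarrow> 'a set set \<Rightarrow> nat" where
  "td_length V E TV = Sup {bag_diameter V E X | X. X \<in> TV}"

end

theory Submission imports Defs "HOL-Library.FuncSet" begin

lemma walk_single[simp]: "walk V E [a] \<longleftrightarrow> a \<in> V"
  by (auto simp: walk_def)

lemma walk_Cons2[simp]: "walk V E (a # b # p) \<longleftrightarrow> a \<in> V \<and> E a b \<and> walk V E (b # p)"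
proof
  assume h: "walk V E (a # b # p)"
  have "E a b" using h unfolding walk_def by (metis Suc_less_eq length_Cons nth_Cons_0 nth_Cons_Suc zero_less_Suc)
  moreover have "walk V E (b # p)" using h unfolding walk_def
    by (auto simp: nth_Cons_Suc)
  ultimately show "a \<in> V \<and> E a b \<and> walk V E (b # p)" using h by (auto simp: walk_def)
next
  assume h: "a \<in> V \<and> E a b \<and> walk V E (b # p)"
  show "walk V E (a # b # p)" unfolding walk_def
  proof (intro conjI allI impI)
    show "set (a # b # p) \<subseteq> V" using h by (auto simp: walk_def)
    fix i assume "Suc i < length (a # b # p)"
    then show "E ((a # b # p) ! i) ((a # b # p) ! Suc i)"
      using h by (cases i) (auto simp: walk_def)
  qed simp
qed

lemma walk_Nil[simp]: "\<not> walk V E []" by (simp add: walk_def)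

lemma walk_Cons_cases: "walk V E (a # p) \<longleftrightarrow> a \<in> V \<and> (p = [] \<or> (E a (hd p) \<and> walk V E p))"
  by (cases p) auto

lemma walk_append_split:
  "walk V E (xs @ ys) \<Longrightarrow> ys \<noteq> [] \<Longrightarrow> walk V E ys"
  by (induction xs) (auto simp: walk_Cons_cases)

lemma walk_append_split1:
  "walk V E (xs @ ys) \<Longrightarrow> xs \<noteq> [] \<Longrightarrow> walk V E xs"
proof (induction xs)
  case (Cons a xs) then show ?case by (cases xs) (auto simp: walk_Cons_cases)
qed simp

lemma walk_join:
  "walk V E (xs @ [y]) \<Longrightarrow> walk V E (y # zs) \<Longrightarrow> walk V E (xs @ y # zs)"
proof (induction xs)
  case (Cons a xs) then show ?case by (cases xs) (auto simp: walk_Cons_cases)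
qed simp

lemma walk_rev:
  assumes "\<And>u v. E u v \<Longrightarrow> E v u" "walk V E p" shows "walk V E (rev p)"
  using assms(2)
proof (induction p)
  case (Cons a p)
  show ?case
  proof (cases p)
    case Nil then show ?thesis using Cons by simp
  next
    case (Cons b q)
    have "walk V E (rev p)" using Cons.IH Cons.prems \<open>p = b # q\<close> by auto
    moreover have "rev p = rev q @ [b]" using \<open>p = b#q\<close> by simp
    moreover have "E b a" using Cons.prems \<open>p = b#q\<close> assms(1) by auto
    moreover have "walk V E [b, a]" using Cons.prems \<open>p = b#q\<close> \<open>E b a\<close> by (auto simp: walk_def)
    ultimately have "walk V E (rev q @ b # [a])" using walk_join[of V E "rev q" b "[a]"] by simp
    then show ?thesis using \<open>p = b#q\<close> by simp
  qed
qed simp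

lemma walk_shorten:
  "walk V E p \<Longrightarrow> \<exists>q. gpath V E q \<and> hd q = hd p \<and> last q = last p \<and> length q \<le> length p"
proof (induction "length p" arbitrary: p rule: less_induct)
  case less
  show ?case
  proof (cases "distinct p")
    case True then show ?thesis using less.prems by (auto simp: gpath_def)
  next
    case False
    then obtain xs ys zs y where p: "p = xs @ [y] @ ys @ [y] @ zs" using not_distinct_decomp by blast
    have w1: "walk V E (xs @ [y])" using less.prems p walk_append_split1[of V E "xs @ [y]" "ys @ [y] @ zs"] by simp
    have w2: "walk V E (y # zs)" using less.prems p walk_append_split[of V E "xs @ [y] @ ys" "y # zs"] by simp
    have w: "walk V E (xs @ y # zs)" using walk_join[OF w1 w2] .
    have "length (xs @ y # zs) < length p" using p by simp
    from less.hyps[OF this w] obtain q where "gpath V E q" "hd q = hd (xs @ y # zs)"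
      "last q = last (xs @ y # zs)" "length q \<le> length (xs @ y # zs)" by blast
    moreover have "hd (xs @ y # zs) = hd p" using p by (cases xs) auto
    moreover have "last (xs @ y # zs) = last p" using p by (cases zs) auto
    ultimately show ?thesis using \<open>length (xs @ y # zs) < length p\<close>
      by (intro exI[of _ q]) auto
  qed
qed


section \<open>Distances\<close>

lemma gdist_walk:
  assumes "connected_graph V E" "u \<in> V" "v \<in> V"
  shows "\<exists>p. walk V E p \<and> hd p = u \<and> last p = v \<and> length p = Suc (gdist V E u v)"
proof -
  obtain p where p: "walk V E p" "hd p = u" "last p = v"
    using assms unfolding connected_graph_def by blast
  then have "\<exists>n p. walk V E p \<and> hd p = u \<and> last p = v \<and> length p = Suc n"
    by (intro exI[of _ "length p - 1"] exI[of _ p]) (cases p; auto)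
  then show ?thesis unfolding gdist_def by (rule LeastI_ex)
qed

lemma gdist_le:
  assumes "walk V E p" "hd p = u" "last p = v"
  shows "gdist V E u v < length p"
proof -
  have "length p = Suc (length p - 1)" using assms(1) by (cases p) auto
  then have "gdist V E u v \<le> length p - 1" unfolding gdist_def using assms
    by (intro Least_le) auto
  then show ?thesis using assms(1) by (cases p) auto
qed

locale G =
  fixes V :: "'a set" and E
  assumes sg: "simple_graph V E" and cg: "connected_graph V E"
begin

abbreviation "D \<equiv> gdist V E"

lemma finV: "finite V" using sg by (simp add: simple_graph_def)
lemma Esym: "E u v \<Longrightarrow> E v u" using sg by (simp add: simple_graph_def)
lemma EV: "E u v \<Longrightarrow> u \<in> V \<and> v \<in> V" using sg by (simp add: simple_graph_def)
lemma Eirr: "\<not> E u u" using sg by (simp add: simple_graph_def)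

lemma D_refl: "u \<in> V \<Longrightarrow> D u u = 0"
  using gdist_le[of V E "[u]" u u] by simp

lemma D_zero: "u \<in> V \<Longrightarrow> v \<in> V \<Longrightarrow> D u v = 0 \<Longrightarrow> u = v"
  using gdist_walk[OF cg, of u v] by (auto simp: length_Suc_conv)

lemma D_tri: assumes "u \<in> V" "v \<in> V" "x \<in> V" shows "D u x \<le> D u v + D v x"
proof -
  obtain p where p: "walk V E p" "hd p = u" "last p = v" "length p = Suc (D u v)"
    using gdist_walk[OF cg assms(1,2)] by blast
  obtain q where q: "walk V E q" "hd q = v" "last q = x" "length q = Suc (D v x)"
    using gdist_walk[OF cg assms(2,3)] by blast
  obtain p' where p': "p = p' @ [v]" using p by (metis append_butlast_last_id walk_Nil)
  obtain q' where q': "q = v # q'" using q by (cases q) auto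
  have "walk V E (p' @ v # q')" using walk_join[of V E p' v q'] p q p' q' by simp
  moreover have "hd (p' @ v # q') = u" using p p' by (cases p') auto
  moreover have "last (p' @ v # q') = x" using q q' by (cases q') auto
  ultimately have "D u x < length (p' @ v # q')" by (rule gdist_le)
  then show ?thesis using p p' q q' by simp
qed

lemma D_sym: assumes "u \<in> V" "v \<in> V" shows "D u v = D v u"
proof -
  have *: "D a b \<le> D b a" if ab: "a \<in> V" "b \<in> V" for a b
  proof -
    obtain p where p: "walk V E p" "hd p = b" "last p = a" "length p = Suc (D b a)"
      using gdist_walk[OF cg ab(2,1)] by blast
    have "walk V E (rev p)" using walk_rev[OF _ p(1)] Esym by blast
    moreover have "hd (rev p) = a" "last (rev p) = b" using p by (auto simp: hd_rev last_rev)
    ultimately have "D a b < length (rev p)" by (rule gdist_le)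
    then show ?thesis using p by simp
  qed
  show ?thesis using *[OF assms] *[OF assms(2,1)] by simp
qed

definition sep :: "'a set \<Rightarrow> 'a set \<Rightarrow> bool" where
  "sep A S \<longleftrightarrow> (\<forall>u y. E u y \<longrightarrow> u \<in> A \<longrightarrow> u \<notin> S \<longrightarrow> y \<in> A)"

lemma walk_hits:
  assumes "sep A S" "walk V E p" "hd p \<in> A" "last p \<notin> A \<or> last p \<in> S"
  shows "\<exists>xs s ys. p = xs @ s # ys \<and> s \<in> S"
  using assms(2-4)
proof (induction p)
  case (Cons a p)
  show ?case
  proof (cases "a \<in> S")
    case True then show ?thesis by (intro exI[of _ "[]"]) auto
  next
    case False
    then have "p \<noteq> []" using Cons.prems by auto
    then obtain b q where pb: "p = b # q" by (cases p) auto
    have "E a b" "walk V E p" using Cons.prems pb by auto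
    then have "b \<in> A" using assms(1) False Cons.prems unfolding sep_def by auto
    then obtain xs s ys where "p = xs @ s # ys" "s \<in> S"
      using Cons.IH \<open>walk V E p\<close> Cons.prems pb by auto
    then show ?thesis by (intro exI[of _ "a # xs"]) auto
  qed
qed simp

lemma sep_guard:
  assumes "A \<subseteq> V" "sep A S" "a \<in> A" "b \<in> V" "b \<notin> A \<or> b \<in> S"
  shows "\<exists>s\<in>S. D a b = D a s + D s b"
proof -
  have aV: "a \<in> V" using assms by auto
  obtain p where p: "walk V E p" "hd p = a" "last p = b" "length p = Suc (D a b)"
    using gdist_walk[OF cg aV assms(4)] by blast
  obtain xs s ys where ps: "p = xs @ s # ys" "s \<in> S"
    using walk_hits[OF assms(2) p(1)] p assms by auto
  have sV: "s \<in> V" using p(1) ps unfolding walk_def by auto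
  have w1: "walk V E (xs @ [s])" using p(1) ps walk_append_split1[of V E "xs @ [s]" ys] by simp
  have w2: "walk V E (s # ys)" using p(1) ps walk_append_split[of V E xs "s # ys"] by simp
  have h1: "hd (xs @ [s]) = a" using p ps by (cases xs) auto
  have h2: "last (s # ys) = b" using p ps by (cases ys) auto
  have "D a s < length (xs @ [s])" using gdist_le[OF w1 h1] by simp
  moreover have "D s b < length (s # ys)" using gdist_le[OF w2 _ h2] by simp
  ultimately have "D a s + D s b \<le> D a b" using p(4) ps by simp
  moreover have "D a b \<le> D a s + D s b" using D_tri[OF aV sV assms(4)] .
  ultimately show ?thesis using ps by (intro bexI[of _ s]) auto
qed

end


section \<open>Rooted tree decompositions\<close>

inductive rt :: "'a set set \<Rightarrow> 'a set \<Rightarrow> bool" where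
  base: "rt {r} r"
| ext: "rt M c \<Longrightarrow> r \<notin> M \<Longrightarrow> \<Union>M \<inter> r \<subseteq> c \<Longrightarrow> rt (insert r M) r"
| join: "rt N1 r \<Longrightarrow> rt N2 r \<Longrightarrow> N1 \<inter> N2 = {r} \<Longrightarrow> \<Union>N1 \<inter> \<Union>N2 \<subseteq> r \<Longrightarrow> rt (N1 \<union> N2) r"

lemma rt_root: "rt N r \<Longrightarrow> r \<in> N"
  by (induction rule: rt.induct) auto

lemma rt_leaf_pair: "rt {Z, r} r" if "Z \<noteq> r"
proof -
  have "rt (insert r {Z}) r" using rt.ext[OF rt.base[of Z], of r] that by auto
  then show ?thesis by (simp add: insert_commute)
qed

lemma rt_add_leaf:
  "rt N r \<Longrightarrow> Y \<in> N \<Longrightarrow> Z \<notin> N \<Longrightarrow> Z \<inter> \<Union>N \<subseteq> Y \<Longrightarrow> rt (insert Z N) r"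
proof (induction arbitrary: Y rule: rt.induct)
  case (base r)
  then have "Z \<noteq> r" by auto
  then have "rt {Z, r} r" by (rule rt_leaf_pair)
  then show ?case by simp
next
  case (ext M c r)
  have h1: "rt M c" and h2: "r \<notin> M" and h3: "\<Union>M \<inter> r \<subseteq> c" by fact+
  have pY: "Y \<in> insert r M" and pZ: "Z \<notin> insert r M" and pI: "Z \<inter> \<Union>(insert r M) \<subseteq> Y" by fact+
  show ?case
  proof (cases "Y = r")
    case True
    have Zr: "Z \<noteq> r" using pZ by simp
    have j: "rt (insert r M \<union> {Z, r}) r"
    proof (rule rt.join)
      show "rt (insert r M) r" by (rule rt.ext[OF h1 h2 h3])
      show "rt {Z, r} r" using rt_leaf_pair[OF Zr] .
      show "insert r M \<inter> {Z, r} = {r}" using pZ by auto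
      have "Z \<inter> r \<subseteq> r" by blast
      moreover have "Z \<inter> \<Union>M \<subseteq> r" using pI True by auto
      moreover have "r \<inter> \<Union>M \<subseteq> r" by blast
      ultimately show "\<Union> (insert r M) \<inter> \<Union> {Z, r} \<subseteq> r" by auto
    qed
    have "insert r M \<union> {Z, r} = insert Z (insert r M)" by auto
    then show ?thesis using j by simp
  next
    case False
    then have YM: "Y \<in> M" using pY by simp
    have ZM: "Z \<notin> M" using pZ by simp
    have ZI: "Z \<inter> \<Union>M \<subseteq> Y" using pI by auto
    have "rt (insert Z M) c" using ext.IH[OF YM ZM ZI] .
    moreover have "r \<notin> insert Z M" using h2 pZ by auto
    moreover have "\<Union>(insert Z M) \<inter> r \<subseteq> c"
    proof -
      have "Z \<inter> r \<subseteq> Y" using pI by auto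
      then have "Z \<inter> r \<subseteq> \<Union>M \<inter> r" using YM by auto
      then show ?thesis using h3 by auto
    qed
    ultimately have "rt (insert r (insert Z M)) r" by (rule rt.ext)
    moreover have "insert r (insert Z M) = insert Z (insert r M)" by (rule insert_commute)
    ultimately show ?thesis by simp
  qed
next
  case (join N1 r N2)
  have h1: "rt N1 r" and h2: "rt N2 r" and h3: "N1 \<inter> N2 = {r}" and h4: "\<Union>N1 \<inter> \<Union>N2 \<subseteq> r" by fact+
  have pY: "Y \<in> N1 \<union> N2" and pZ: "Z \<notin> N1 \<union> N2" and pI: "Z \<inter> \<Union>(N1 \<union> N2) \<subseteq> Y" by fact+
  show ?case
  proof (cases "Y \<in> N1")
    case True
    have j: "rt (insert Z N1 \<union> N2) r"
    proof (rule rt.join)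
      have "Z \<notin> N1" "Z \<inter> \<Union>N1 \<subseteq> Y" using pZ pI by auto
      then show "rt (insert Z N1) r" using join.IH(1)[OF True] by blast
      show "rt N2 r" by fact
      show "insert Z N1 \<inter> N2 = {r}" using h3 pZ by auto
      have "Z \<inter> \<Union>N2 \<subseteq> Y \<inter> \<Union>N2" using pI by auto
      also have "\<dots> \<subseteq> r" using h4 True by auto
      finally show "\<Union> (insert Z N1) \<inter> \<Union> N2 \<subseteq> r" using h4 by auto
    qed
    then show ?thesis by simp
  next
    case False
    then have Y2: "Y \<in> N2" using pY by simp
    have j: "rt (N1 \<union> insert Z N2) r"
    proof (rule rt.join)
      have "Z \<notin> N2" "Z \<inter> \<Union>N2 \<subseteq> Y" using pZ pI by auto
      then show "rt (insert Z N2) r" using join.IH(2)[OF Y2] by blast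
      show "rt N1 r" by fact
      show "N1 \<inter> insert Z N2 = {r}" using h3 pZ by auto
      have "Z \<inter> \<Union>N1 \<subseteq> Y \<inter> \<Union>N1" using pI by auto
      also have "\<dots> \<subseteq> r" using h4 Y2 by auto
      finally show "\<Union> N1 \<inter> \<Union> (insert Z N2) \<subseteq> r" using h4 by auto
    qed
    then show ?thesis by simp
  qed
qed


section \<open>From trees to rooted decompositions\<close>

definition PP :: "'b set set \<Rightarrow> ('b set \<Rightarrow> 'b set \<Rightarrow> bool) \<Rightarrow> bool" where
  "PP N TE \<longleftrightarrow> (\<forall>p. gpath N TE p \<longrightarrow> (\<forall>Y\<in>set p. hd p \<inter> last p \<subseteq> Y))"

lemma walk_mono: "walk V E p \<Longrightarrow> V \<subseteq> V' \<Longrightarrow> (\<And>a b. E a b \<Longrightarrow> E' a b) \<Longrightarrow> walk V' E' p"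
  by (auto simp: walk_def)

lemma walk_restrict: "walk V E p \<Longrightarrow> Z \<notin> set p \<Longrightarrow>
   walk (V - {Z}) (\<lambda>a b. E a b \<and> a \<noteq> Z \<and> b \<noteq> Z) p"
  unfolding walk_def by auto

lemma gpath_suffix: "gpath V E (xs @ ys) \<Longrightarrow> ys \<noteq> [] \<Longrightarrow> gpath V E ys"
  by (auto simp: gpath_def dest: walk_append_split)

lemma tree_rt:
  "finite N \<Longrightarrow> is_tree N TE \<Longrightarrow> PP N TE \<Longrightarrow> \<exists>r. rt N r"
proof (induction "card N" arbitrary: N TE rule: less_induct)
  case less
  note tr = less.prems(2) and pp = less.prems(3)
  have sg: "simple_graph N TE" and cn: "connected_graph N TE" and nc: "\<not> has_cycle N TE"
    using tr by (auto simp: is_tree_def)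
  have sym: "\<And>a b. TE a b \<Longrightarrow> TE b a" and irr: "\<And>a. \<not> TE a a"
    and inN: "\<And>a b. TE a b \<Longrightarrow> a \<in> N \<and> b \<in> N" using sg by (auto simp: simple_graph_def)
  have "N \<noteq> {}" using cn by (simp add: connected_graph_def)
  show ?case
  proof (cases "\<exists>u\<in>N. \<exists>v\<in>N. u \<noteq> v")
    case False
    then obtain r where "N = {r}" using \<open>N \<noteq> {}\<close> by blast
    then show ?thesis using rt.base by blast
  next
    case True
    then obtain u v where uv: "u \<in> N" "v \<in> N" "u \<noteq> v" by blast
    obtain p0 where p0: "walk N TE p0" "hd p0 = u" "last p0 = v"
      using cn uv unfolding connected_graph_def by blast
    obtain a b q0 where "p0 = a # b # q0" using p0 uv
      by (cases p0; cases "tl p0") auto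
    then have ab: "TE a b" "a \<in> N" "b \<in> N" using p0 inN by auto
    have gab: "gpath N TE [a, b]" using ab irr by (auto simp: gpath_def walk_def less_Suc_eq)
    define P where "P m \<longleftrightarrow> (\<exists>p. gpath N TE p \<and> length p = m)" for m
    have P2: "P 2" using gab unfolding P_def by (intro exI[of _ "[a,b]"]) auto
    have Pb: "\<forall>m. P m \<longrightarrow> m \<le> card N"
    proof (intro allI impI)
      fix m assume "P m"
      then obtain p where "gpath N TE p" "length p = m" unfolding P_def by blast
      then have "card (set p) = m" "set p \<subseteq> N" by (auto simp: gpath_def walk_def distinct_card)
      then show "m \<le> card N" using less.prems(1) card_mono by metis
    qed
    obtain m where m: "P m" "\<forall>m'. P m' \<longrightarrow> m' \<le> m" using Nat.ex_has_greatest_nat[OF P2 Pb] by blast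
    obtain p where p: "gpath N TE p" "length p = m" using m unfolding P_def by blast
    have "m \<ge> 2" using m P2 by auto
    obtain q Y Z where pq: "p = q @ [Y, Z]"
    proof -
      obtain Z' Y' rq where "rev p = Z' # Y' # rq" using p \<open>m \<ge> 2\<close>
        by (cases "rev p"; cases "tl (rev p)") auto
      then have "p = rev rq @ [Y', Z']" by (metis rev_rev_ident rev.simps append.assoc append_Cons append_Nil)
      then show ?thesis using that by blast
    qed
    have wp: "walk N TE p" and dp: "distinct p" using p by (auto simp: gpath_def)
    have ZY: "TE Z Y" using wp pq walk_append_split[of N TE q "[Y, Z]"] sym by auto
    have ZN: "Z \<in> N" and YN: "Y \<in> N" using inN ZY by auto
    have YZ: "Y \<noteq> Z" using irr ZY by auto
    have leaf: "W = Y" if "TE Z W" for W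
    proof (rule ccontr)
      assume WY: "W \<noteq> Y"
      have WZ: "W \<noteq> Z" using irr that by auto
      show False
      proof (cases "W \<in> set p")
        case False
        have "walk N TE ((q @ [Y]) @ Z # [W])"
          using walk_join[of N TE "q @ [Y]" Z "[W]"] wp pq that inN by auto
        then have "gpath N TE (p @ [W])" using dp False pq by (auto simp: gpath_def)
        then have "P (Suc m)" unfolding P_def using p by (intro exI[of _ "p @ [W]"]) auto
        then show False using m by auto
      next
        case True
        then have "W \<in> set q" using pq WY WZ by auto
        then obtain q1 q2 where "q = q1 @ W # q2" by (meson split_list)
        then have "p = q1 @ (W # q2 @ [Y, Z])" using pq by simp
        then have "gpath N TE (W # q2 @ [Y, Z])" using gpath_suffix p by (metis list.simps(3))
        then have "has_cycle N TE" unfolding has_cycle_def using that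
          by (intro exI[of _ "W # q2 @ [Y, Z]"]) auto
        then show False using nc by simp
      qed
    qed
    define N' where "N' = N - {Z}"
    define TE' where "TE' = (\<lambda>a b. TE a b \<and> a \<noteq> Z \<and> b \<noteq> Z)"
    have YN': "Y \<in> N'" using YN YZ by (auto simp: N'_def)
    have mono: "walk N TE g" if "walk N' TE' g" for g
      using walk_mono[OF that] by (auto simp: N'_def TE'_def)
    have avoid: "gpath N' TE' g" if "gpath N TE g" "hd g \<noteq> Z" "last g \<noteq> Z" for g
    proof -
      have "Z \<notin> set g"
      proof
        assume "Z \<in> set g"
        then obtain g1 g2 where g: "g = g1 @ Z # g2" by (meson split_list)
        have "g1 \<noteq> []" using that(2) g by auto
        have "g2 \<noteq> []" using that(3) g by auto
        have w: "walk N TE g" "distinct g" using that(1) by (auto simp: gpath_def)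
        have "g = butlast g1 @ (last g1 # Z # g2)" using g \<open>g1 \<noteq> []\<close> by simp
        then have "walk N TE (last g1 # Z # g2)"
          using walk_append_split[of N TE "butlast g1" "last g1 # Z # g2"] w by simp
        then have "TE (last g1) Z" "TE Z (hd g2)" using \<open>g2 \<noteq> []\<close> by (cases g2; auto)+
        then have "last g1 = Y" "hd g2 = Y" using leaf sym by blast+
        then have "Y \<in> set g1" "Y \<in> set g2" using \<open>g1 \<noteq> []\<close> \<open>g2 \<noteq> []\<close>
          by (metis last_in_set, metis hd_in_set)
        then show False using w(2) g by auto
      qed
      moreover have "walk N TE g" "distinct g" using that(1) by (auto simp: gpath_def)
      ultimately have "walk N' TE' g" using walk_restrict[of N TE g Z] unfolding N'_def TE'_def by blast
      then show ?thesis using \<open>distinct g\<close> by (simp add: gpath_def)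
    qed
    have conn': "\<exists>g. gpath N' TE' g \<and> hd g = x \<and> last g = y" if xy: "x \<in> N'" "y \<in> N'" for x y
    proof -
      have xyN: "x \<in> N" "y \<in> N" "x \<noteq> Z" "y \<noteq> Z" using xy by (simp_all add: N'_def)
      obtain g0 where g0: "walk N TE g0" "hd g0 = x" "last g0 = y"
        using cn xyN(1,2) unfolding connected_graph_def by blast
      obtain g where g: "gpath N TE g" "hd g = hd g0" "last g = last g0"
        using walk_shorten[OF g0(1)] by blast
      have "gpath N' TE' g" using avoid[OF g(1)] g g0 xyN by simp
      then show ?thesis using g g0 by blast
    qed
    have tree': "is_tree N' TE'"
      unfolding is_tree_def
    proof (intro conjI)
      have f: "finite N'" using less.prems(1) by (simp add: N'_def)
      have i: "\<forall>a b. TE' a b \<longrightarrow> a \<in> N' \<and> b \<in> N'" using inN by (auto simp: TE'_def N'_def)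
      have sy: "\<forall>a b. TE' a b \<longrightarrow> TE' b a" using sym by (auto simp: TE'_def)
      have ir: "\<forall>a. \<not> TE' a a" using irr by (auto simp: TE'_def)
      show "simple_graph N' TE'" unfolding simple_graph_def using f i sy ir by blast
      have "\<forall>x\<in>N'. \<forall>y\<in>N'. \<exists>g. walk N' TE' g \<and> hd g = x \<and> last g = y"
      proof (intro ballI)
        fix x y assume "x \<in> N'" "y \<in> N'"
        then obtain g where "gpath N' TE' g" "hd g = x" "last g = y" using conn' by blast
        then show "\<exists>g. walk N' TE' g \<and> hd g = x \<and> last g = y" unfolding gpath_def by blast
      qed
      then show "connected_graph N' TE'" unfolding connected_graph_def using YN' by blast
      show "\<not> has_cycle N' TE'"
      proof
        assume "has_cycle N' TE'"
        then obtain c where c: "gpath N' TE' c" "length c \<ge> 3" "TE' (last c) (hd c)"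
          unfolding has_cycle_def by blast
        have "walk N TE c" using mono c(1) by (simp add: gpath_def)
        then have "gpath N TE c" using c(1) by (simp add: gpath_def)
        moreover have "TE (last c) (hd c)" using c(3) by (simp add: TE'_def)
        ultimately have "has_cycle N TE" unfolding has_cycle_def using c(2) by blast
        then show False using nc by simp
      qed
    qed
    have pp': "PP N' TE'" unfolding PP_def
    proof (intro allI impI)
      fix g assume "gpath N' TE' g"
      then have "gpath N TE g" using mono by (simp add: gpath_def)
      then show "\<forall>Y\<in>set g. hd g \<inter> last g \<subseteq> Y" using pp by (simp add: PP_def)
    qed
    have "card N' < card N" unfolding N'_def by (rule card_Diff1_less[OF less.prems(1) ZN])
    then obtain r where r: "rt N' r" using less.hyps[of N' TE'] tree' pp' less.prems(1)
      by (auto simp: N'_def)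
    have RI: "Z \<inter> \<Union>N' \<subseteq> Y"
    proof
      fix x assume "x \<in> Z \<inter> \<Union>N'"
      then obtain X where X: "X \<in> N'" "x \<in> X" "x \<in> Z" by blast
      show "x \<in> Y"
      proof (cases "X = Y")
        case True then show ?thesis using X by simp
      next
        case False
        obtain g where g: "gpath N' TE' g" "hd g = Y" "last g = X" using conn'[OF YN' X(1)] by blast
        have "g \<noteq> []" using g by (auto simp: gpath_def)
        have "Z \<notin> set g" using g by (auto simp: gpath_def walk_def N'_def)
        have "walk N TE g" using g mono by (auto simp: gpath_def)
        then have "walk N TE (Z # g)" using ZY ZN g \<open>g \<noteq> []\<close> by (cases g) auto
        then have "gpath N TE (Z # g)" using \<open>Z \<notin> set g\<close> g by (auto simp: gpath_def)
        moreover have "Y \<in> set (Z # g)" using g \<open>g \<noteq> []\<close> by (cases g) auto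
        ultimately have "hd (Z # g) \<inter> last (Z # g) \<subseteq> Y" using pp unfolding PP_def by blast
        moreover have "last (Z # g) = X" using g \<open>g \<noteq> []\<close> by simp
        ultimately show ?thesis using X by auto
      qed
    qed
    have "rt (insert Z N') r" using rt_add_leaf[OF r YN' _ RI] by (auto simp: N'_def)
    moreover have "insert Z N' = N" using ZN by (auto simp: N'_def)
    ultimately show ?thesis by auto
  qed
qed


section \<open>Main covering argument\<close>

locale TD = G V E for V :: "'a set" and E +
  fixes TV :: "'a set set" and R :: "'a set"
  assumes TVfin: "finite TV" and cover: "\<Union>TV = V"
    and edges: "\<And>u v. E u v \<Longrightarrow> \<exists>X\<in>TV. u \<in> X \<and> v \<in> X"
    and RV: "R \<subseteq> V"
begin

definition good :: "'a set \<Rightarrow> bool" where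
  "good g \<longleftrightarrow> g \<subseteq> V \<and> (\<exists>B1\<in>TV. \<exists>B2\<in>TV. \<forall>x\<in>R. \<forall>v\<in>g. \<exists>s\<in>B1 \<union> B2. D x v = D x s + D s v)"

definition att :: "'a set set \<Rightarrow> 'a set \<Rightarrow> bool" where
  "att N r \<longleftrightarrow> N \<subseteq> TV \<and> \<Union>N \<inter> \<Union>(TV - N) \<subseteq> r"

definition Lin :: "'a set set \<Rightarrow> 'a set \<Rightarrow> 'a set" where
  "Lin N r = R \<inter> (\<Union>N - r)"

lemma finR: "finite R" using RV finV finite_subset by blast

lemma finLin: "finite (Lin N r)" using finR by (simp add: Lin_def)

lemma bagV: "X \<in> TV \<Longrightarrow> X \<subseteq> V" using cover by blast

lemma UV: "N \<subseteq> TV \<Longrightarrow> \<Union>N \<subseteq> V" using cover by blast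

lemma att_sep: assumes "att N r" shows "sep (\<Union>N) r"
  unfolding sep_def
proof (intro allI impI)
  fix u y assume uy: "E u y" "u \<in> \<Union>N" "u \<notin> r"
  obtain X where X: "X \<in> TV" "u \<in> X" "y \<in> X" using edges[OF uy(1)] by blast
  show "y \<in> \<Union>N"
  proof (cases "X \<in> N")
    case True then show ?thesis using X by blast
  next
    case False
    then have "u \<in> \<Union>(TV - N)" using X by blast
    then have "u \<in> r" using assms uy(2) unfolding att_def by blast
    then show ?thesis using uy(3) by simp
  qed
qed

lemma guard_in:
  assumes "sep A K" "A \<subseteq> V" "x \<in> A" "v \<in> V" "v \<notin> A \<or> v \<in> K"
  shows "\<exists>s\<in>K. D x v = D x s + D s v"
  using sep_guard[OF assms(2) assms(1) assms(3-5)] .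

lemma guard_out:
  assumes "att N r" "r \<in> TV" "v \<in> \<Union>N" "x \<in> R" "x \<notin> \<Union>N \<or> x \<in> r"
  shows "\<exists>s\<in>r. D x v = D x s + D s v"
proof -
  have NV: "\<Union>N \<subseteq> V" using assms(1) UV unfolding att_def by blast
  have xV: "x \<in> V" using assms(4) RV by blast
  have vV: "v \<in> V" using assms(3) NV by blast
  obtain s where s: "s \<in> r" "D v x = D v s + D s x"
    using sep_guard[OF NV att_sep[OF assms(1)] assms(3) xV assms(5)] by blast
  have sV: "s \<in> V" using s(1) bagV[OF assms(2)] by blast
  have "D x v = D x s + D s v" using s(2) D_sym[OF xV vV] D_sym[OF xV sV] D_sym[OF sV vV] by simp
  then show ?thesis using s(1) by blast
qed

definition Inv where
  "Inv N r A K \<G> \<longleftrightarrow> K \<in> TV \<and> A \<subseteq> \<Union>N \<and> A \<subseteq> V \<and> sep A K \<and> Lin N r \<subseteq> A \<and> finite \<G>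
     \<and> card \<G> + 2 \<le> 3 * card (Lin N r) \<and> A \<subseteq> \<Union>\<G> \<and> (\<forall>g\<in>\<G>. good g)"

lemma pending_good:
  assumes "Inv N r A K \<G>" "att N r" "r \<in> TV"
  shows "good (\<Union>N - A)"
proof -
  have sub: "\<Union>N - A \<subseteq> V" using assms(2) UV unfolding att_def by blast
  have KT: "K \<in> TV" using assms(1) by (simp add: Inv_def)
  have "\<forall>x\<in>R. \<forall>v\<in>\<Union>N - A. \<exists>s\<in>K \<union> r. D x v = D x s + D s v"
  proof (intro ballI)
    fix x v assume x: "x \<in> R" and v: "v \<in> \<Union>N - A"
    have vV: "v \<in> V" using v sub by blast
    show "\<exists>s\<in>K \<union> r. D x v = D x s + D s v"
    proof (cases "x \<in> Lin N r")
      case True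
      then have "x \<in> A" using assms(1) by (auto simp: Inv_def)
      moreover have "sep A K" "A \<subseteq> V" using assms(1) by (auto simp: Inv_def)
      ultimately show ?thesis using guard_in[of A K x v] vV v by blast
    next
      case False
      then have "x \<notin> \<Union>N \<or> x \<in> r" using x by (auto simp: Lin_def)
      then show ?thesis using guard_out[OF assms(2,3) _ x] v by blast
    qed
  qed
  then show ?thesis unfolding good_def using sub KT assms(3) by blast
qed

lemma main:
  "rt N r \<Longrightarrow> att N r \<Longrightarrow> Lin N r \<noteq> {} \<Longrightarrow> \<exists>A K \<G>. Inv N r A K \<G>"
proof (induction rule: rt.induct)
  case (base r)
  then show ?case by (simp add: Lin_def)
next
  case (ext M c r)
  have h1: "rt M c" and h2: "r \<notin> M" and h3: "\<Union>M \<inter> r \<subseteq> c" by fact+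
  have attN: "att (insert r M) r" and LN: "Lin (insert r M) r \<noteq> {}" by fact+
  have rT: "r \<in> TV" and MT: "M \<subseteq> TV" using attN by (auto simp: att_def)
  have cM: "c \<in> M" using rt_root[OF h1] .
  have cT: "c \<in> TV" using cM MT by blast
  have attM: "att M c" unfolding att_def
  proof (intro conjI)
    show "M \<subseteq> TV" by fact
    have "TV - M \<subseteq> insert r (TV - insert r M)" by blast
    then have "\<Union>(TV - M) \<subseteq> r \<union> \<Union>(TV - insert r M)" by blast
    moreover have "\<Union>M \<inter> \<Union>(TV - insert r M) \<subseteq> r" using attN by (auto simp: att_def)
    ultimately show "\<Union>M \<inter> \<Union>(TV - M) \<subseteq> c" using h3 by blast
  qed
  have LMN: "Lin M c \<subseteq> Lin (insert r M) r" using h3 by (auto simp: Lin_def)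
  have LNM: "Lin (insert r M) r \<subseteq> \<Union>M" by (auto simp: Lin_def)
  have MV: "\<Union>M \<subseteq> V" using UV MT by blast
  have cardLN: "card (Lin (insert r M) r) \<ge> 1" using LN finLin by (simp add: Suc_le_eq card_gt_0_iff)
  show ?case
  proof (cases "Lin M c = {}")
    case True
    have g: "good (\<Union>M)" unfolding good_def
    proof (intro conjI)
      show "\<Union>M \<subseteq> V" by fact
      have "\<forall>x\<in>R. \<forall>v\<in>\<Union>M. \<exists>s\<in>c \<union> c. D x v = D x s + D s v"
      proof (intro ballI)
        fix x v assume x: "x \<in> R" and v: "v \<in> \<Union>M"
        have "x \<notin> \<Union>M \<or> x \<in> c" using True x by (auto simp: Lin_def)
        then show "\<exists>s\<in>c \<union> c. D x v = D x s + D s v" using guard_out[OF attM cT v x] by simp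
      qed
      then show "\<exists>B1\<in>TV. \<exists>B2\<in>TV. \<forall>x\<in>R. \<forall>v\<in>\<Union>M. \<exists>s\<in>B1 \<union> B2. D x v = D x s + D s v"
        using cT by blast
    qed
    have "Inv (insert r M) r (\<Union>M) c {\<Union>M}" unfolding Inv_def
      using cT MV att_sep[OF attM] LNM g cardLN by auto
    then show ?thesis by blast
  next
    case False
    obtain A K \<G> where I: "Inv M c A K \<G>" using ext.IH[OF attM False] by blast
    show ?thesis
    proof (cases "Lin (insert r M) r = Lin M c")
      case True
      have "Inv (insert r M) r A K \<G>" using I True unfolding Inv_def by auto
      then show ?thesis by blast
    next
      case False
      then have "Lin M c \<subset> Lin (insert r M) r" using LMN by blast
      then have lt: "card (Lin M c) < card (Lin (insert r M) r)" using finLin psubset_card_mono by blast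
      define \<G>' where "\<G>' = insert (\<Union>M - A) \<G>"
      have pg: "good (\<Union>M - A)" using pending_good[OF I attM cT] .
      have fin: "finite \<G>" using I by (simp add: Inv_def)
      have c1: "card \<G>' \<le> card \<G> + 1" unfolding \<G>'_def using fin by (simp add: card_insert_le_m1 card_insert_if)
      have c2: "card \<G> + 2 \<le> 3 * card (Lin M c)" using I by (simp add: Inv_def)
      have "A \<subseteq> \<Union>\<G>" "\<forall>g\<in>\<G>. good g" using I by (auto simp: Inv_def)
      then have cov: "\<Union>M \<subseteq> \<Union>\<G>'" "\<forall>g\<in>\<G>'. good g" using pg unfolding \<G>'_def by auto
      have "Inv (insert r M) r (\<Union>M) c \<G>'" unfolding Inv_def
        using cT MV att_sep[OF attM] LNM cov fin c1 c2 lt unfolding \<G>'_def by auto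
      then show ?thesis by blast
    qed
  qed
next
  case (join N1 r N2)
  have h1: "rt N1 r" and h2: "rt N2 r" and h3: "N1 \<inter> N2 = {r}" and h4: "\<Union>N1 \<inter> \<Union>N2 \<subseteq> r" by fact+
  have attN: "att (N1 \<union> N2) r" and LN: "Lin (N1 \<union> N2) r \<noteq> {}" by fact+
  have T12: "N1 \<subseteq> TV" "N2 \<subseteq> TV" using attN by (auto simp: att_def)
  have rT: "r \<in> TV" using rt_root[OF h1] T12 by blast
  have att1: "att N1 r" unfolding att_def
  proof (intro conjI)
    show "N1 \<subseteq> TV" by fact
    have "TV - N1 \<subseteq> (TV - (N1 \<union> N2)) \<union> N2" by blast
    then have "\<Union>(TV - N1) \<subseteq> \<Union>(TV - (N1 \<union> N2)) \<union> \<Union>N2" by blast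
    moreover have "\<Union>N1 \<inter> \<Union>(TV - (N1 \<union> N2)) \<subseteq> r" using attN by (auto simp: att_def)
    ultimately show "\<Union>N1 \<inter> \<Union>(TV - N1) \<subseteq> r" using h4 by blast
  qed
  have att2: "att N2 r" unfolding att_def
  proof (intro conjI)
    show "N2 \<subseteq> TV" by fact
    have "TV - N2 \<subseteq> (TV - (N1 \<union> N2)) \<union> N1" by blast
    then have "\<Union>(TV - N2) \<subseteq> \<Union>(TV - (N1 \<union> N2)) \<union> \<Union>N1" by blast
    moreover have "\<Union>N2 \<inter> \<Union>(TV - (N1 \<union> N2)) \<subseteq> r" using attN by (auto simp: att_def)
    ultimately show "\<Union>N2 \<inter> \<Union>(TV - N2) \<subseteq> r" using h4 by blast
  qed
  have Lu: "Lin (N1 \<union> N2) r = Lin N1 r \<union> Lin N2 r" by (auto simp: Lin_def)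
  have Ld: "Lin N1 r \<inter> Lin N2 r = {}" using h4 by (auto simp: Lin_def)
  have cardL: "card (Lin (N1 \<union> N2) r) = card (Lin N1 r) + card (Lin N2 r)"
    using Lu Ld finLin card_Un_disjoint by metis
  show ?case
  proof (cases "Lin N2 r = {}")
    case True
    then have "Lin N1 r \<noteq> {}" using LN Lu by auto
    then obtain A K \<G> where I: "Inv N1 r A K \<G>" using join.IH(1)[OF att1] by blast
    have "Inv (N1 \<union> N2) r A K \<G>" using I True Lu unfolding Inv_def by auto
    then show ?thesis by blast
  next
    case F2: False
    show ?thesis
    proof (cases "Lin N1 r = {}")
      case True
      then obtain A K \<G> where I: "Inv N2 r A K \<G>" using join.IH(2)[OF att2 F2] by blast
      have "Inv (N1 \<union> N2) r A K \<G>" using I True Lu unfolding Inv_def by auto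
      then show ?thesis by blast
    next
      case F1: False
      obtain A1 K1 \<G>1 where I1: "Inv N1 r A1 K1 \<G>1" using join.IH(1)[OF att1 F1] by blast
      obtain A2 K2 \<G>2 where I2: "Inv N2 r A2 K2 \<G>2" using join.IH(2)[OF att2 F2] by blast
      define \<G> where "\<G> = insert (\<Union>N1 - A1) (insert (\<Union>N2 - A2) (\<G>1 \<union> \<G>2))"
      have fin: "finite \<G>1" "finite \<G>2" using I1 I2 by (auto simp: Inv_def)
      have c0: "card \<G> \<le> card \<G>1 + card \<G>2 + 2"
      proof -
        have "card \<G> \<le> card (\<G>1 \<union> \<G>2) + 2" unfolding \<G>_def using fin
          by (metis add_2_eq_Suc' card_insert_le_m1 card_insert_if finite_Un finite_insert le_SucI nat_le_linear not_less_eq_eq Suc_le_mono)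
        also have "\<dots> \<le> card \<G>1 + card \<G>2 + 2" using card_Un_le[of \<G>1 \<G>2] by simp
        finally show ?thesis .
      qed
      have c1: "card \<G>1 + 2 \<le> 3 * card (Lin N1 r)" and c2: "card \<G>2 + 2 \<le> 3 * card (Lin N2 r)"
        using I1 I2 by (auto simp: Inv_def)
      have pg1: "good (\<Union>N1 - A1)" using pending_good[OF I1 att1 rT] .
      have pg2: "good (\<Union>N2 - A2)" using pending_good[OF I2 att2 rT] .
      have "A1 \<subseteq> \<Union>\<G>1" "A2 \<subseteq> \<Union>\<G>2" "\<forall>g\<in>\<G>1. good g" "\<forall>g\<in>\<G>2. good g"
        using I1 I2 by (auto simp: Inv_def)
      then have cov: "\<Union>(N1 \<union> N2) \<subseteq> \<Union>\<G>" "\<forall>g\<in>\<G>. good g" using pg1 pg2 unfolding \<G>_def by auto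
      have "Inv (N1 \<union> N2) r (\<Union>(N1 \<union> N2)) r \<G>" unfolding Inv_def
      proof (intro conjI)
        show "r \<in> TV" by fact
        show "\<Union>(N1 \<union> N2) \<subseteq> V" using UV T12 by blast
        show "sep (\<Union> (N1 \<union> N2)) r" using att_sep[OF attN] .
        show "finite \<G>" using fin unfolding \<G>_def by simp
        show "card \<G> + 2 \<le> 3 * card (Lin (N1 \<union> N2) r)" using c0 c1 c2 cardL by linarith
      qed (use cov in \<open>auto simp: Lin_def\<close>)
      then show ?thesis by blast
    qed
  qed
qed

lemma cover_all:
  assumes "rt TV r" "R \<noteq> {}"
  shows "\<exists>\<G>. finite \<G> \<and> card \<G> \<le> 3 * card R \<and> V \<subseteq> \<Union>\<G> \<and> (\<forall>g\<in>\<G>. good g)"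
proof -
  have rT: "r \<in> TV" using rt_root[OF assms(1)] .
  have att: "att TV r" by (simp add: att_def)
  have cR: "card R \<ge> 1" using assms(2) finR by (simp add: Suc_le_eq card_gt_0_iff)
  show ?thesis
  proof (cases "Lin TV r = {}")
    case True
    have "\<forall>x\<in>R. \<forall>v\<in>V. \<exists>s\<in>r \<union> r. D x v = D x s + D s v"
    proof (intro ballI)
      fix x v assume x: "x \<in> R" and v: "v \<in> V"
      have "x \<in> r" using True x RV cover by (auto simp: Lin_def)
      then show "\<exists>s\<in>r \<union> r. D x v = D x s + D s v" using guard_out[OF att rT _ x] v cover by simp
    qed
    then have "good V" unfolding good_def using rT by blast
    then show ?thesis using cR by (intro exI[of _ "{V}"]) auto
  next
    case False
    obtain A K \<G> where I: "Inv TV r A K \<G>" using main[OF assms(1) att False] by blast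
    have pg: "good (\<Union>TV - A)" using pending_good[OF I att rT] .
    have fin: "finite \<G>" and c: "card \<G> + 2 \<le> 3 * card (Lin TV r)" and cv: "A \<subseteq> \<Union>\<G>"
      and gd: "\<forall>g\<in>\<G>. good g" using I by (auto simp: Inv_def)
    have "card (Lin TV r) \<le> card R" using finR by (auto simp: Lin_def intro: card_mono)
    moreover have "card (insert (\<Union>TV - A) \<G>) \<le> card \<G> + 1" using fin by (simp add: card_insert_if)
    ultimately have "card (insert (\<Union>TV - A) \<G>) \<le> 3 * card R" using c by linarith
    moreover have "V \<subseteq> \<Union>(insert (\<Union>TV - A) \<G>)" using cv cover by auto
    ultimately show ?thesis using fin pg gd by (intro exI[of _ "insert (\<Union>TV - A) \<G>"]) auto
  qed
qed

end

locale TD2 = TD V E TV R for V :: "'a set" and E TV R +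
  fixes d l w :: nat
  assumes dB: "\<And>x y. x \<in> V \<Longrightarrow> y \<in> V \<Longrightarrow> D x y \<le> d"
    and lB: "\<And>X x y. X \<in> TV \<Longrightarrow> x \<in> X \<Longrightarrow> y \<in> X \<Longrightarrow> D x y \<le> l"
    and wB: "\<And>X. X \<in> TV \<Longrightarrow> card X \<le> w + 1"
    and ne: "\<And>X. X \<in> TV \<Longrightarrow> X \<noteq> {}"
    and res: "\<And>u v. u \<in> V \<Longrightarrow> v \<in> V \<Longrightarrow> u \<noteq> v \<Longrightarrow> \<exists>x\<in>R. D x u \<noteq> D x v"
begin

definition code :: "'a set \<Rightarrow> 'a \<Rightarrow> nat \<times> ('a \<Rightarrow> nat)" where
  "code B v = (D (SOME s. s \<in> B) v, restrict (\<lambda>s. D s v + l - D (SOME s. s \<in> B) v) B)"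

lemma code_range:
  assumes "B \<in> TV" "v \<in> V"
  shows "code B v \<in> {0..d} \<times> (\<Pi>\<^sub>E s\<in>B. {0..2*l})"
proof -
  define s0 where "s0 = (SOME s. s \<in> B)"
  have s0: "s0 \<in> B" unfolding s0_def using ne[OF assms(1)] by (simp add: some_in_eq)
  have BV: "B \<subseteq> V" using bagV[OF assms(1)] .
  have "D s0 v \<le> d" using dB s0 BV assms(2) by blast
  moreover have "D s v + l - D s0 v \<le> 2 * l" if "s \<in> B" for s
  proof -
    have "D s v \<le> D s s0 + D s0 v" using D_tri[of s s0 v] that s0 BV assms(2) by blast
    moreover have "D s s0 \<le> l" using lB[OF assms(1) that s0] .
    ultimately show ?thesis by linarith
  qed
  ultimately show ?thesis unfolding code_def s0_def[symmetric] by auto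
qed

lemma code_inj:
  assumes "B \<in> TV" "v \<in> V" "v' \<in> V" "code B v = code B v'" "s \<in> B"
  shows "D s v = D s v'"
proof -
  define s0 where "s0 = (SOME s. s \<in> B)"
  have s0: "s0 \<in> B" unfolding s0_def using ne[OF assms(1)] by (simp add: some_in_eq)
  have BV: "B \<subseteq> V" using bagV[OF assms(1)] .
  have e1: "D s0 v = D s0 v'" using assms(4) unfolding code_def s0_def[symmetric] by simp
  have "snd (code B v) = snd (code B v')" using assms(4) by simp
  then have "restrict (\<lambda>s. D s v + l - D s0 v) B = restrict (\<lambda>s. D s v' + l - D s0 v') B"
    unfolding code_def s0_def[symmetric] snd_conv .
  then have "restrict (\<lambda>s. D s v + l - D s0 v) B s = restrict (\<lambda>s. D s v' + l - D s0 v') B s"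
    by (rule fun_cong)
  then have e2: "D s v + l - D s0 v = D s v' + l - D s0 v'" using assms(5) by simp
  have lsv: "D s0 s \<le> l" using lB[OF assms(1) s0 assms(5)] .
  have "D s0 v \<le> D s0 s + D s v" using D_tri[of s0 s v] s0 assms(5) BV assms(2) by blast
  moreover have "D s0 v' \<le> D s0 s + D s v'" using D_tri[of s0 s v'] s0 assms(5) BV assms(3) by blast
  ultimately show ?thesis using e1 e2 lsv by linarith
qed

lemma card_range: "finite B \<Longrightarrow> card ({0..d} \<times> (\<Pi>\<^sub>E s\<in>B. {0..2*l})) = (d+1) * (2*l+1) ^ card B"
  by (simp add: card_cartesian_product card_PiE)

lemma group_card:
  assumes "good g"
  shows "card g \<le> ((d+1) * (2*l+1) ^ (w+1))^2"
proof -
  obtain B1 B2 where B: "B1 \<in> TV" "B2 \<in> TV" and gV: "g \<subseteq> V"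
    and gu: "\<forall>x\<in>R. \<forall>v\<in>g. \<exists>s\<in>B1 \<union> B2. D x v = D x s + D s v"
    using assms unfolding good_def by blast
  define S where "S B = {0..d} \<times> (\<Pi>\<^sub>E s\<in>B. {0..2*l})" for B :: "'a set"
  define h where "h v = (code B1 v, code B2 v)" for v
  have fB: "finite B1" "finite B2" using B bagV finV finite_subset by blast+
  have inj: "inj_on h g"
  proof (rule inj_onI)
    fix v v' assume v: "v \<in> g" and v': "v' \<in> g" and hv: "h v = h v'"
    have vV: "v \<in> V" "v' \<in> V" using v v' gV by auto
    have eq: "D s v = D s v'" if "s \<in> B1 \<union> B2" for s
    proof (cases "s \<in> B1")
      case True then show ?thesis using code_inj[OF B(1) vV] hv unfolding h_def by simp
    next
      case False then have "s \<in> B2" using that by simp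
      then show ?thesis using code_inj[OF B(2) vV] hv unfolding h_def by simp
    qed
    have half: "D x b \<le> D x a" if x: "x \<in> R" and ab: "a \<in> g" "b \<in> g" "\<forall>s\<in>B1 \<union> B2. D s a = D s b" for x a b
    proof -
      obtain s where s: "s \<in> B1 \<union> B2" "D x a = D x s + D s a" using gu x ab(1) by blast
      have sV: "s \<in> V" using s(1) B bagV by blast
      have "D x b \<le> D x s + D s b" using D_tri[of x s b] x RV sV ab(2) gV by blast
      then show ?thesis using s ab(3) by simp
    qed
    have "\<forall>x\<in>R. D x v = D x v'"
    proof
      fix x assume x: "x \<in> R"
      have e1: "\<forall>s\<in>B1 \<union> B2. D s v = D s v'" using eq by blast
      have e2: "\<forall>s\<in>B1 \<union> B2. D s v' = D s v" using eq by simp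
      have "D x v' \<le> D x v" using half[OF x v v' e1] .
      moreover have "D x v \<le> D x v'" using half[OF x v' v e2] .
      ultimately show "D x v = D x v'" by simp
    qed
    then show "v = v'" using res[OF vV] by blast
  qed
  have "h ` g \<subseteq> S B1 \<times> S B2" using code_range B gV unfolding h_def S_def by blast
  moreover have "finite (S B1 \<times> S B2)" unfolding S_def using fB by (simp add: finite_PiE)
  ultimately have "card g \<le> card (S B1 \<times> S B2)" using card_inj_on_le[OF inj] by blast
  also have "\<dots> = (d+1) * (2*l+1) ^ card B1 * ((d+1) * (2*l+1) ^ card B2)"
    unfolding S_def card_cartesian_product[of "{0..d} \<times> (\<Pi>\<^sub>E s\<in>B1. {0..2*l})"] card_range[OF fB(1)] card_range[OF fB(2)] ..
  also have "\<dots> \<le> (d+1) * (2*l+1) ^ (w+1) * ((d+1) * (2*l+1) ^ (w+1))"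
  proof -
    have o: "(1::nat) \<le> 2*l+1" by simp
    have "(2*l+1) ^ card B1 \<le> (2*l+1) ^ (w+1)" by (rule power_increasing[OF wB[OF B(1)] o])
    moreover have "(2*l+1) ^ card B2 \<le> (2*l+1) ^ (w+1)" by (rule power_increasing[OF wB[OF B(2)] o])
    ultimately show ?thesis by (intro mult_mono) auto
  qed
  finally show ?thesis by (simp add: power2_eq_square)
qed

lemma final_bound:
  assumes "rt TV r" "R \<noteq> {}"
  shows "card V \<le> 3 * card R * ((d+1) * (2*l+1) ^ (w+1))^2"
proof -
  obtain \<G> where G: "finite \<G>" "card \<G> \<le> 3 * card R" "V \<subseteq> \<Union>\<G>" "\<forall>g\<in>\<G>. good g"
    using cover_all[OF assms] by blast
  have "\<Union>\<G> \<subseteq> V" using G(4) unfolding good_def by blast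
  then have "\<Union>\<G> = V" using G(3) by blast
  then have "card V \<le> sum card \<G>" using card_Union_le_sum_card by metis
  also have "\<dots> \<le> card \<G> * ((d+1) * (2*l+1) ^ (w+1))^2"
    using sum_bounded_above[of \<G> card "((d+1) * (2*l+1) ^ (w+1))^2"] group_card G(4) by simp
  also have "\<dots> \<le> 3 * card R * ((d+1) * (2*l+1) ^ (w+1))^2" using G(2) by simp
  finally show ?thesis .
qed

end

lemma fin_img: "finite A \<Longrightarrow> finite {f x | x. x \<in> A}"
  by (simp add: Setcompr_eq_image)

lemma Sup_fin_ge: "finite S \<Longrightarrow> (x::nat) \<in> S \<Longrightarrow> x \<le> Sup S"
  by (rule le_cSup_finite)

lemma num_bound:
  fixes n k d l w :: nat
  assumes "n \<le> 3 * k * ((d+1) * (2*l+1) ^ (w+1))^2" "d \<ge> 1" "w \<ge> 1"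
  shows "n \<le> 12 * k * d^2 * (2*l+1)^(3*w+1)"
proof -
  have a1: "((d+1) * (2*l+1) ^ (w+1))^2 = (d+1)^2 * ((2*l+1)^(w+1))^2"
    by (rule power_mult_distrib)
  have a2: "((2*l+1)^(w+1))^2 = (2*l+1)^((w+1)*2)" by (rule power_mult[symmetric])
  have a3: "(w+1)*2 = 2*w+2" by simp
  have a: "((d+1) * (2*l+1) ^ (w+1))^2 = (d+1)^2 * (2*l+1)^(2*w+2)" unfolding a1 a2 a3 ..
  have b: "(d+1)^2 \<le> 4 * d^2"
  proof -
    have "d + 1 \<le> 2 * d" using assms(2) by simp
    then have "(d+1)^2 \<le> (2*d)^2" by (rule power_mono) simp
    then show ?thesis by (simp add: power_mult_distrib)
  qed
  have c: "(2*l+1)^(2*w+2) \<le> (2*l+1)^(3*w+1)"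
    by (rule power_increasing) (use assms(3) in simp_all)
  have "(d+1)^2 * (2*l+1)^(2*w+2) \<le> 4 * d^2 * (2*l+1)^(3*w+1)"
    using mult_mono[OF b c] by simp
  then have "3 * k * ((d+1)^2 * (2*l+1)^(2*w+2)) \<le> 3 * k * (4 * d^2 * (2*l+1)^(3*w+1))"
    by (rule mult_left_mono) simp
  moreover have "n \<le> 3 * k * ((d+1)^2 * (2*l+1)^(2*w+2))" using assms(1) unfolding a .
  ultimately have f: "n \<le> 3 * k * (4 * d^2 * (2*l+1)^(3*w+1))" by (rule order_trans[rotated])
  have g: "\<And>x y::nat. 3 * k * (4 * y * x) = 12 * k * y * x" by (simp add: ac_simps)
  show ?thesis using f unfolding g .
qed

theorem theorem2:
  shows "\<exists>C::real. C > 0 \<and>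
    (\<forall>(V::nat set) E TV TE R n d l w k.
       simple_graph V E \<and> connected_graph V E \<and> n = card V \<and> n \<ge> 2 \<and>
       d = diameter V E \<and>
       tree_decomposition V E TV TE \<and> reduced TV \<and>
       l = td_length V E TV \<and> w = td_width TV \<and>
       resolving_set V E R \<and> k = card R
       \<longrightarrow> real n \<le> C * real k * real d ^ 2 * (2 * real l + 1) ^ (3 * w + 1))"
proof (intro exI[of _ 12] conjI allI impI)
  show "(12::real) > 0" by simp
  fix V :: "nat set" and E TV TE R n d l w k
  assume H: "simple_graph V E \<and> connected_graph V E \<and> n = card V \<and> n \<ge> 2 \<and>
       d = diameter V E \<and>
       tree_decomposition V E TV TE \<and> reduced TV \<and>
       l = td_length V E TV \<and> w = td_width TV \<and>
       resolving_set V E R \<and> k = card R"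
  have sg: "simple_graph V E" and cg: "connected_graph V E" and nV: "n = card V" and n2: "n \<ge> 2"
    and dd: "d = diameter V E" and td: "tree_decomposition V E TV TE" and red: "reduced TV"
    and ll: "l = td_length V E TV" and ww: "w = td_width TV" and rs: "resolving_set V E R"
    and kk: "k = card R" using H by simp_all
  interpret G V E using sg cg by unfold_locales
  have tr: "is_tree TV TE" and cov: "\<Union>TV = V" and edg: "\<forall>u v. E u v \<longrightarrow> (\<exists>X\<in>TV. u \<in> X \<and> v \<in> X)"
    and pth: "\<forall>p. gpath TV TE p \<longrightarrow> (\<forall>Y\<in>set p. hd p \<inter> last p \<subseteq> Y)"
    using td unfolding tree_decomposition_def by blast+
  have finTV: "finite TV" using tr by (simp add: is_tree_def simple_graph_def)
  have RV: "R \<subseteq> V" using rs by (simp add: resolving_set_def)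
  interpret TD V E TV R
    using finTV cov edg RV by unfold_locales blast+
  have finV': "finite V" by (rule finV)
  have dB: "\<And>x y. x \<in> V \<Longrightarrow> y \<in> V \<Longrightarrow> D x y \<le> d"
  proof -
    fix x y assume "x \<in> V" "y \<in> V"
    have "{gdist V E x y | x y. x \<in> V \<and> y \<in> V} \<subseteq> (\<lambda>(x,y). gdist V E x y) ` (V \<times> V)" by auto
    then have "finite {gdist V E x y | x y. x \<in> V \<and> y \<in> V}"
      using finite_subset finV' by blast
    then show "D x y \<le> d" unfolding dd diameter_def using \<open>x \<in> V\<close> \<open>y \<in> V\<close>
      by (intro Sup_fin_ge) blast+
  qed
  have lB: "\<And>X x y. X \<in> TV \<Longrightarrow> x \<in> X \<Longrightarrow> y \<in> X \<Longrightarrow> D x y \<le> l"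
  proof -
    fix X x y assume X: "X \<in> TV" "x \<in> X" "y \<in> X"
    have fX: "finite X" using bagV[OF X(1)] finV' finite_subset by blast
    have "{gdist V E x y | x y. x \<in> X \<and> y \<in> X} \<subseteq> (\<lambda>(x,y). gdist V E x y) ` (X \<times> X)" by auto
    then have "finite {gdist V E x y | x y. x \<in> X \<and> y \<in> X}"
      using finite_subset fX by blast
    then have "D x y \<le> bag_diameter V E X" unfolding bag_diameter_def using X
      by (intro Sup_fin_ge) blast+
    also have "\<dots> \<le> l" unfolding ll td_length_def
      using fin_img[OF finTV, of "bag_diameter V E"] X(1) by (intro Sup_fin_ge) blast+
    finally show "D x y \<le> l" .
  qed
  have wB: "\<And>X. X \<in> TV \<Longrightarrow> card X \<le> w + 1"
  proof -
    fix X assume X: "X \<in> TV"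
    have "card X - 1 \<le> w" unfolding ww td_width_def
      using fin_img[OF finTV, of "\<lambda>X. card X - 1"] X by (intro Sup_fin_ge) blast+
    then show "card X \<le> w + 1" by simp
  qed
  have ne: "\<And>X. X \<in> TV \<Longrightarrow> X \<noteq> {}"
  proof
    fix X assume X: "X \<in> TV" "X = {}"
    show False
    proof (cases "\<exists>Y\<in>TV. Y \<noteq> X")
      case True
      then obtain Y where "Y \<in> TV" "Y \<noteq> X" by blast
      then show False using red X unfolding reduced_def by blast
    next
      case False
      then have "V = {}" using cov X by blast
      then show False using n2 nV by simp
    qed
  qed
  have res: "\<And>u v. u \<in> V \<Longrightarrow> v \<in> V \<Longrightarrow> u \<noteq> v \<Longrightarrow> \<exists>x\<in>R. D x u \<noteq> D x v"
    using rs unfolding resolving_set_def by blast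
  interpret TD2 V E TV R d l w
    using dB lB wB ne res by unfold_locales blast+
  have "PP TV TE" using pth by (simp add: PP_def)
  then obtain r where r: "rt TV r" using tree_rt[OF finTV tr] by blast
  obtain u v where uv: "u \<in> V" "v \<in> V" "u \<noteq> v"
  proof -
    have c2: "card V \<ge> 2" using n2 nV by simp
    then have "V \<noteq> {}" by auto
    then obtain u where u: "u \<in> V" by blast
    have "card (V - {u}) = card V - 1" using u finV' by simp
    then have "card (V - {u}) \<ge> 1" using c2 by simp
    then have "V - {u} \<noteq> {}" by (cases "V - {u} = {}") simp_all
    then obtain v where "v \<in> V - {u}" by blast
    then show ?thesis using that u by blast
  qed
  have Rne: "R \<noteq> {}" using res[OF uv] by blast
  have "card V \<le> 3 * card R * ((d+1) * (2*l+1) ^ (w+1))^2" using final_bound[OF r Rne] .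
  moreover have d1: "d \<ge> 1"
  proof -
    have "D u v \<noteq> 0" using D_zero uv by blast
    then show ?thesis using dB[OF uv(1,2)] by simp
  qed
  moreover have w1: "w \<ge> 1"
  proof -
    obtain p0 where p0: "walk V E p0" "hd p0 = u" "last p0 = v"
      using cg uv unfolding connected_graph_def by blast
    obtain a b q0 where "p0 = a # b # q0" using p0 uv
      by (cases p0; cases "tl p0") auto
    then have ab: "E a b" using p0 by auto
    obtain X where X: "X \<in> TV" "a \<in> X" "b \<in> X" using edg ab by blast
    have "a \<noteq> b" using ab Eirr by blast
    have fX: "finite X" using bagV[OF X(1)] finV' finite_subset by blast
    have "card {a, b} \<le> card X" using X fX by (intro card_mono) auto
    then have "card X \<ge> 2" using \<open>a \<noteq> b\<close> by simp
    moreover have "card X - 1 \<le> w" unfolding ww td_width_def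
      using fin_img[OF finTV, of "\<lambda>X. card X - 1"] X by (intro Sup_fin_ge) blast+
    ultimately show ?thesis by simp
  qed
  ultimately have "card V \<le> 12 * card R * d^2 * (2*l+1)^(3*w+1)" by (rule num_bound)
  then have "real (card V) \<le> real (12 * card R * d^2 * (2*l+1)^(3*w+1))" by (simp only: of_nat_le_iff)
  moreover have "real (12 * card R * d^2 * (2*l+1)^(3*w+1)) = 12 * real (card R) * real d ^ 2 * (2 * real l + 1) ^ (3*w+1)"
    by (simp only: of_nat_mult of_nat_power of_nat_add of_nat_numeral of_nat_1)
  ultimately have "real (card V) \<le> 12 * real (card R) * real d ^ 2 * (2 * real l + 1) ^ (3*w+1)"
    by (rule ord_le_eq_trans)
  then show "real n \<le> 12 * real k * real d ^ 2 * (2 * real l + 1) ^ (3 * w + 1)"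
    unfolding nV kk .
qed

end
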